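(* Let $\Omega$ be a verification operator for $|\Psi\rangle$ with second largest eigenvalue $\beta$ and smallest eigenvalue $\tau$, and let $0<\epsilon<1$, $0<\delta\le1/2$. Then $F(1,\delta,\Omega)\ge1-\epsilon$ (i.e. $\Omega$ verifies the target state within infidelity $\epsilon$ and significance level $\delta$ using a single test) iff $$0<\beta<\delta\quad\text{and}\quad\frac{\tau(\delta-\beta)}{1+\tau-2\beta}\ge\delta(1-\epsilon).$$
   Context: Let $\mathcal H$ be a Hilbert space of finite dimension $D\ge2$ and $|\Psi\rangle\in\mathcal H$ a unit vector. A verification operator for $|\Psi\rangle$ is a Hermitian operator $\Omega$ on $\mathcal H$ with $0\le\Omega\le1$, $\Omega|\Psi\rangle=|\Psi\rangle$, whose eigenvalue $1$ is nondegenerate. For a density operator $\rho$ on $\mathcal H^{\otimes2}$ put $p_\rho=\mathrm{tr}[(\Omega\otimes1)\rho]$, $f_\rho=\mathrm{tr}[(\Omega\otimes|\Psi\rangle\langle\Psi|)\rho]$, and $F(1,\delta,\Omega)=\min\{f_\rho/p_\rho:p_\rho\ge\delta\}$, the minimum over permutation-invariant density operators on $\mathcal H^{\otimes2}$. *)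

theory Defs
  imports "HOL-Analysis.Analysis"
begin

text \<open>Operators on a D-dimensional Hilbert space are complex matrices indexed by a
finite type 'n (D = CARD('n)); operators on the two-fold tensor product are matrices
indexed by 'n \<times> 'n.\<close>

definition hermitian :: "complex^'n^'n \<Rightarrow> bool" where
  "hermitian A \<longleftrightarrow> (\<forall>i j. A$i$j = cnj (A$j$i))"

definition qform :: "complex^'n^'n \<Rightarrow> complex^'n \<Rightarrow> complex" where
  "qform A v = (\<Sum>i\<in>UNIV. \<Sum>j\<in>UNIV. cnj (v$i) * A$i$j * v$j)"

definition psd :: "complex^'n^'n \<Rightarrow> bool" where
  "psd A \<longleftrightarrow> hermitian A \<and> (\<forall>v. 0 \<le> Re (qform A v))"

definition verification_operator :: "complex^'n^'n \<Rightarrow> complex^'n \<Rightarrow> bool" where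
  "verification_operator Om Psi \<longleftrightarrow>
     hermitian Om \<and> psd Om \<and> psd (mat 1 - Om) \<and> Om *v Psi = Psi \<and>
     (\<forall>v. Om *v v = v \<longrightarrow> (\<exists>c. v = c *s Psi))"

definition real_eigenvalue :: "complex^'n^'n \<Rightarrow> real \<Rightarrow> bool" where
  "real_eigenvalue A l \<longleftrightarrow> (\<exists>v. v \<noteq> 0 \<and> A *v v = complex_of_real l *s v)"

definition tensor_op :: "complex^'n^'n \<Rightarrow> complex^'m^'m \<Rightarrow> complex^('n\<times>'m)^('n\<times>'m)" where
  "tensor_op A B = (\<chi> x y. A$(fst x)$(fst y) * B$(snd x)$(snd y))"

definition proj :: "complex^'n \<Rightarrow> complex^'n^'n" where
  "proj Psi = (\<chi> i j. Psi$i * cnj (Psi$j))"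

definition density :: "complex^'n^'n \<Rightarrow> bool" where
  "density rho \<longleftrightarrow> psd rho \<and> trace rho = 1"

text \<open>Permutation invariance: SWAP rho SWAP = rho, written out entrywise.\<close>
definition perm_invariant :: "complex^('n::finite\<times>'n)^('n\<times>'n) \<Rightarrow> bool" where
  "perm_invariant rho \<longleftrightarrow> (\<forall>a b. rho$a$b = rho$(prod.swap a)$(prod.swap b))"

definition p_val :: "complex^'n^'n \<Rightarrow> complex^('n::finite\<times>'n)^('n\<times>'n) \<Rightarrow> real" where
  "p_val Om rho = Re (trace (tensor_op Om (mat 1) ** rho))"

definition f_val :: "complex^'n^'n \<Rightarrow> complex^'n \<Rightarrow> complex^('n::finite\<times>'n)^('n\<times>'n) \<Rightarrow> real" where
  "f_val Om Psi rho = Re (trace (tensor_op Om (proj Psi) ** rho))"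

text \<open>F(1,\<delta>,\<Omega>): the minimum (attained infimum) of f/p over permutation-invariant
density operators with p \<ge> \<delta>.\<close>
definition F1 :: "real \<Rightarrow> complex^'n^'n \<Rightarrow> complex^'n \<Rightarrow> real" where
  "F1 delta Om Psi = Inf {f_val Om Psi rho / p_val Om rho | rho.
       density rho \<and> perm_invariant rho \<and> delta \<le> p_val Om rho}"

end

theory Submission
  imports Defs
begin
definition cinner :: "complex^'n \<Rightarrow> complex^'n \<Rightarrow> complex" where
  "cinner x y = (\<Sum>i\<in>UNIV. cnj (x$i) * y$i)"

lemma cinner_add_right: "cinner x (y + z) = cinner x y + cinner x z"
  by (simp add: cinner_def distrib_left sum.distrib)
lemma cinner_add_left: "cinner (x + y) z = cinner x z + cinner y z"
  by (simp add: cinner_def distrib_right sum.distrib)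
lemma cinner_diff_right: "cinner x (y - z) = cinner x y - cinner x z"
  by (simp add: cinner_def right_diff_distrib sum_subtractf)
lemma cinner_diff_left: "cinner (x - y) z = cinner x z - cinner y z"
  by (simp add: cinner_def left_diff_distrib sum_subtractf)
lemma cinner_scale_right: "cinner x (c *s y) = c * cinner x y"
  by (simp add: cinner_def sum_distrib_left mult_ac)
lemma cinner_scale_left: "cinner (c *s x) y = cnj c * cinner x y"
  by (simp add: cinner_def sum_distrib_left mult_ac)
lemma cinner_zero_left[simp]: "cinner 0 y = 0" by (simp add: cinner_def)
lemma cinner_zero_right[simp]: "cinner x 0 = 0" by (simp add: cinner_def)
lemma cinner_commute: "cinner y x = cnj (cinner x y)"
  by (simp add: cinner_def mult.commute)
lemma cinner_sum_right: "cinner x (\<Sum>i\<in>I. f i) = (\<Sum>i\<in>I. cinner x (f i))"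
  by (induction I rule: infinite_finite_induct) (auto simp: cinner_add_right)
lemma cinner_sum_left: "cinner (\<Sum>i\<in>I. f i) y = (\<Sum>i\<in>I. cinner (f i) y)"
  by (induction I rule: infinite_finite_induct) (auto simp: cinner_add_left)

lemma cinner_self: "cinner x x = complex_of_real ((norm x)^2)"
proof -
  have "cinner x x = (\<Sum>i\<in>UNIV. complex_of_real ((norm (x$i))^2))"
    unfolding cinner_def by (intro sum.cong refl) (metis complex_norm_square mult.commute)
  also have "\<dots> = complex_of_real (\<Sum>i\<in>UNIV. (norm (x$i))^2)" by simp
  also have "(\<Sum>i\<in>UNIV. (norm (x$i))^2) = (norm x)^2"
    by (simp add: norm_vec_def L2_set_def sum_nonneg)
  finally show ?thesis .
qed

lemma inner_vec_cinner: "(x::complex^'n) \<bullet> y = Re (cinner x y)"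
  by (simp add: inner_vec_def cinner_def inner_complex_def Re_sum)

lemma hermitian_adj:
  assumes "hermitian A" shows "cinner x (A *v y) = cinner (A *v x) y"
proof -
  have "cinner x (A *v y) = (\<Sum>i\<in>UNIV. \<Sum>j\<in>UNIV. cnj (x$i) * A$i$j * y$j)"
    by (simp add: cinner_def matrix_vector_mult_def sum_distrib_left mult_ac)
  also have "\<dots> = (\<Sum>j\<in>UNIV. \<Sum>i\<in>UNIV. cnj (x$i) * A$i$j * y$j)" by (rule sum.swap)
  also have "\<dots> = (\<Sum>j\<in>UNIV. \<Sum>i\<in>UNIV. cnj (A$j$i * x$i) * y$j)"
    using assms unfolding hermitian_def by (intro sum.cong refl) (metis complex_cnj_cnj complex_cnj_mult mult.commute)
  also have "\<dots> = cinner (A *v x) y"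
    by (simp add: cinner_def matrix_vector_mult_def sum_distrib_right cnj_sum)
  finally show ?thesis .
qed

lemma qform_cinner: "qform A v = cinner v (A *v v)"
  by (simp add: qform_def cinner_def matrix_vector_mult_def sum_distrib_left mult_ac)

lemma scaleR_vec_s: "(r::real) *\<^sub>R (v::complex^'n) = complex_of_real r *s v"
  by (simp add: vec_eq_iff) (simp add: scaleR_conv_of_real)

lemma mv_scale: "(A::complex^'n^'n) *v (c *s z) = c *s (A *v z)"
  by (simp add: vec_eq_iff matrix_vector_mult_def sum_distrib_left mult_ac)

lemma mv_diff: "(A::complex^'n^'n) *v (x - y) = A *v x - A *v y"
  by (simp add: vec_eq_iff matrix_vector_mult_def right_diff_distrib sum_subtractf)

lemma mv_add: "(A::complex^'n^'n) *v (x + y) = A *v x + A *v y"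
  by (simp add: vec_eq_iff matrix_vector_mult_def distrib_left sum.distrib)

lemma cinner_eq_zero_iff: "cinner x x = 0 \<longleftrightarrow> x = 0"
  by (simp add: cinner_self)

lemma cinner_self_real: "Re (cinner x x) = (norm x)^2"
  by (simp add: cinner_self)

lemma quad_aux:
  fixes a b :: real
  assumes "\<forall>t. 0 \<le> -2*t*a + t^2*b" "a \<ge> 0"
  shows "a = 0"
proof (rule ccontr)
  assume "a \<noteq> 0" hence a: "a > 0" using assms by simp
  define t where "t = a / (\<bar>b\<bar> + 1)"
  have t: "t > 0" using a by (simp add: t_def)
  have "t * \<bar>b\<bar> < a" using a unfolding t_def
    by (simp add: field_simps)
  have "t^2*b \<le> t*(t*\<bar>b\<bar>)" using t by (simp add: power2_eq_square mult_left_mono)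
  also have "\<dots> < t*a" using mult_strict_left_mono[OF \<open>t * \<bar>b\<bar> < a\<close> t] .
  finally have "t^2 * b < t * a" .
  moreover have "0 < t * a" using t a by simp
  ultimately have "-2*t*a + t^2*b < 0" by simp
  thus False using assms(1) by (metis not_le)
qed

lemma eig_in_subspace:
  fixes A :: "complex^'n^'n"
  assumes herm: "hermitian A" and clW: "closed W"
    and scW: "\<And>z c. z \<in> W \<Longrightarrow> c *s z \<in> W"
    and dfW: "\<And>z1 z2. z1 \<in> W \<Longrightarrow> z2 \<in> W \<Longrightarrow> z1 - z2 \<in> W"
    and AW: "\<And>z. z \<in> W \<Longrightarrow> A *v z \<in> W"
    and y: "y \<in> W" "y \<noteq> 0"
  shows "\<exists>x0 m. x0 \<in> W \<and> norm x0 = 1 \<and> A *v x0 = complex_of_real m *s x0"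
proof -
  define T where "T = W \<inter> sphere 0 1"
  define f where "f z = Re (cinner z (A *v z))" for z
  have cT: "compact T" unfolding T_def by (intro closed_Int_compact clW compact_sphere)
  have "(1 / norm y) *\<^sub>R y \<in> W"
    using y scW[of y] by (simp add: scaleR_vec_s)
  hence yT: "(1 / norm y) *\<^sub>R y \<in> T" using y unfolding T_def by simp
  have cf: "continuous_on T f"
    unfolding f_def cinner_def matrix_vector_mult_def by (intro continuous_intros)
  obtain x0 where x0: "x0 \<in> T" "\<And>z. z \<in> T \<Longrightarrow> f z \<le> f x0"
    using continuous_attains_sup[OF cT _ cf] yT by blast
  define m where "m = f x0"
  have nx0: "norm x0 = 1" "x0 \<in> W" using x0 unfolding T_def by auto
  have cx0: "cinner x0 x0 = 1" using nx0 by (simp add: cinner_self)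
  have bound: "f z \<le> m * (norm z)^2" if "z \<in> W" for z
  proof (cases "z = 0")
    case True thus ?thesis by (simp add: f_def)
  next
    case False
    define n where "n = norm z"
    have n: "n > 0" using False by (simp add: n_def)
    define z' where "z' = (1 / n) *\<^sub>R z"
    have "z' \<in> W" using that scW unfolding z'_def by (simp add: scaleR_vec_s)
    moreover have "norm z' = 1" using n by (simp add: z'_def n_def)
    ultimately have "z' \<in> T" unfolding T_def by simp
    hence "f z' \<le> m" using x0 m_def by auto
    moreover have "f z' = (1/n)^2 * f z"
      unfolding f_def z'_def scaleR_vec_s mv_scale cinner_scale_left cinner_scale_right
      by (simp add: power2_eq_square)
    ultimately have "(1/n)^2 * f z \<le> m" by simp
    hence "n^2 * ((1/n)^2 * f z) \<le> n^2 * m" by (simp add: mult_left_mono)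
    thus ?thesis using n by (simp add: n_def power2_eq_square field_simps)
  qed
  define g where "g = complex_of_real m *s x0 - A *v x0"
  have gW: "g \<in> W" unfolding g_def using nx0 scW AW dfW by blast
  define Q where "Q z = m * (norm z)^2 - f z" for z
  have Qnn: "Q z \<ge> 0" if "z \<in> W" for z using bound[OF that] by (simp add: Q_def)
  have Qx0: "Q x0 = 0" using nx0 by (simp add: Q_def m_def)
  have Qform: "Q z = Re (cinner z (complex_of_real m *s z - A *v z))" for z
    by (simp add: Q_def f_def cinner_diff_right cinner_scale_right cinner_self)
  have adj: "cinner x0 (complex_of_real m *s g - A *v g) = cinner g g"
  proof -
    have "cinner x0 (complex_of_real m *s g - A *v g) = complex_of_real m * cinner x0 g - cinner (A *v x0) g"
      by (simp add: cinner_diff_right cinner_scale_right hermitian_adj[OF herm])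
    also have "\<dots> = cinner g g"
      by (simp add: g_def cinner_diff_left cinner_scale_left)
    finally show ?thesis .
  qed
  have gx: "cinner g (complex_of_real m *s x0 - A *v x0) = cinner g g" by (simp add: g_def)
  have "\<forall>t. 0 \<le> -2*t*(norm g)^2 + t^2 * Q g"
  proof
    fix t :: real
    define M where "M z = complex_of_real m *s z - A *v z" for z
    define c where "c = complex_of_real t"
    have lin: "M (x0 - c *s g) = M x0 - c *s M g"
      unfolding M_def by (simp add: mv_diff mv_scale vec_eq_iff algebra_simps)
    have ex: "cinner (x0 - c *s g) (M x0 - c *s M g) = cinner x0 (M x0) - c * cinner x0 (M g)
         - cnj c * cinner g (M x0) + cnj c * c * cinner g (M g)"
      by (simp add: cinner_diff_left cinner_diff_right cinner_scale_left cinner_scale_right algebra_simps)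
    have "x0 - complex_of_real t *s g \<in> W" using nx0 gW scW dfW by blast
    hence "0 \<le> Q (x0 - complex_of_real t *s g)" by (rule Qnn)
    also have "Q (x0 - complex_of_real t *s g) = Q x0 - t * Re (cinner x0 (complex_of_real m *s g - A *v g))
        - t * Re (cinner g (complex_of_real m *s x0 - A *v x0)) + t^2 * Q g"
      unfolding Qform M_def[symmetric] c_def[symmetric] lin ex
      by (simp add: c_def power2_eq_square)
    also have "\<dots> = -2*t*(norm g)^2 + t^2 * Q g"
      using Qx0 adj gx by (simp add: cinner_self)
    finally show "0 \<le> -2*t*(norm g)^2 + t^2 * Q g" .
  qed
  hence "(norm g)^2 = 0" by (intro quad_aux) auto
  hence "g = 0" by simp
  hence "A *v x0 = complex_of_real m *s x0" by (simp add: g_def)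
  thus ?thesis using nx0 by blast
qed

definition eig_family :: "complex^'n^'n \<Rightarrow> nat \<Rightarrow> (nat \<Rightarrow> complex^'n) \<Rightarrow> (nat \<Rightarrow> real) \<Rightarrow> bool" where
  "eig_family A k e lam \<longleftrightarrow> (\<forall>i<k. A *v e i = complex_of_real (lam i) *s e i) \<and>
     (\<forall>i<k. \<forall>j<k. cinner (e i) (e j) = (if i = j then 1 else 0))"

lemma orthonormal_bound:
  fixes e :: "nat \<Rightarrow> complex^'n"
  assumes on: "\<forall>i<k. \<forall>j<k. cinner (e i) (e j) = (if i = j then 1 else 0)"
  shows "2 * k \<le> DIM(complex^'n)"
proof -
  define S1 where "S1 = e ` {..<k}"
  define S2 where "S2 = (\<lambda>i. \<i> *s e i) ` {..<k}"
  have ci: "cinner (e i) (\<i> *s e j) = \<i> * (if i = j then 1 else 0)"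
     "cinner (\<i> *s e i) (e j) = - \<i> * (if i = j then 1 else 0)"
     "cinner (\<i> *s e i) (\<i> *s e j) = (if i = j then 1 else 0)"
     if "i < k" "j < k" for i j
    using on that by (auto simp: cinner_scale_left cinner_scale_right)
  have inj1: "inj_on e {..<k}"
  proof (rule inj_onI)
    fix i j assume "i \<in> {..<k}" "j \<in> {..<k}" "e i = e j"
    thus "i = j" using on by (metis lessThan_iff one_neq_zero)
  qed
  have inj2: "inj_on (\<lambda>i. \<i> *s e i) {..<k}"
  proof (rule inj_onI)
    fix i j assume a: "i \<in> {..<k}" "j \<in> {..<k}" "\<i> *s e i = \<i> *s e j"
    hence "cinner (\<i> *s e i) (\<i> *s e j) = 1" using ci(3)[of i i] by auto
    thus "i = j" using ci(3)[of i j] a by (auto split: if_splits)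
  qed
  have disj: "S1 \<inter> S2 = {}"
  proof (rule ccontr)
    assume "S1 \<inter> S2 \<noteq> {}"
    then obtain i j where ij: "i < k" "j < k" "e i = \<i> *s e j" unfolding S1_def S2_def by auto
    have "Re (cinner (e i) (e i)) = 1" using on ij(1) by simp
    moreover have "Re (cinner (e i) (\<i> *s e j)) = 0" using ci(1)[OF ij(1,2)] by simp
    ultimately show False using ij(3) by simp
  qed
  have po: "x \<bullet> y = 0" if xin: "x \<in> S1 \<union> S2" and yin: "y \<in> S1 \<union> S2" and neq: "x \<noteq> y" for x y
  proof -
    obtain i where i: "i < k" "x = e i \<or> x = \<i> *s e i" using xin unfolding S1_def S2_def by blast
    obtain j where j: "j < k" "y = e j \<or> y = \<i> *s e j" using yin unfolding S1_def S2_def by blast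
    show ?thesis
    proof (cases "x = e i")
      case x: True
      show ?thesis
      proof (cases "y = e j")
        case True
        hence "i \<noteq> j" using x neq by auto
        thus ?thesis using x True on[rule_format, OF i(1) j(1)] by (simp add: inner_vec_cinner)
      next
        case False
        hence "y = \<i> *s e j" using j by auto
        thus ?thesis using x ci(1)[OF i(1) j(1)] by (simp add: inner_vec_cinner)
      qed
    next
      case x: False
      hence x': "x = \<i> *s e i" using i by auto
      show ?thesis
      proof (cases "y = e j")
        case True
        thus ?thesis using x' ci(2)[OF i(1) j(1)] by (simp add: inner_vec_cinner)
      next
        case False
        hence y': "y = \<i> *s e j" using j by auto
        hence "i \<noteq> j" using x' neq by auto
        thus ?thesis using x' y' ci(3)[OF i(1) j(1)] by (simp add: inner_vec_cinner)
      qed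
    qed
  qed
  have "pairwise orthogonal (S1 \<union> S2)"
    unfolding pairwise_def orthogonal_def using po by blast
  moreover have "0 \<notin> S1 \<union> S2"
  proof
    assume "0 \<in> S1 \<union> S2"
    then obtain i where "i < k" "e i = 0 \<or> \<i> *s e i = 0" unfolding S1_def S2_def by auto
    thus False using on ci(3)[of i i] by (metis cinner_zero_left zero_neq_one)
  qed
  ultimately have "independent (S1 \<union> S2)" by (rule pairwise_orthogonal_independent)
  hence "card (S1 \<union> S2) \<le> DIM(complex^'n)" using independent_bound by blast
  moreover have "card (S1 \<union> S2) = 2 * k"
    using disj inj1 inj2 unfolding S1_def S2_def
    by (simp add: card_Un_disjoint card_image)
  ultimately show ?thesis by simp
qed

lemma spectral:
  fixes A :: "complex^'n^'n"
  assumes herm: "hermitian A"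
  shows "\<exists>k e lam. eig_family A k e lam \<and> (\<forall>x. x = (\<Sum>i<k. cinner (e i) x *s e i))"
proof -
  define K where "K = {k. \<exists>e lam. eig_family A k e lam}"
  have "0 \<in> K" unfolding K_def eig_family_def by auto
  have Kb: "K \<subseteq> {..DIM(complex^'n)}"
  proof
    fix k assume "k \<in> K"
    then obtain e lam where "eig_family A k e lam" unfolding K_def by blast
    hence "2*k \<le> DIM(complex^'n)" unfolding eig_family_def using orthonormal_bound[of k e] by blast
    thus "k \<in> {..DIM(complex^'n)}" by simp
  qed
  hence fK: "finite K" by (rule finite_subset) simp
  define k where "k = Max K"
  have "k \<in> K" unfolding k_def using fK \<open>0 \<in> K\<close> by (intro Max_in) auto
  then obtain e lam where ef: "eig_family A k e lam" unfolding K_def by auto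
  have notin: "Suc k \<notin> K"
  proof
    assume "Suc k \<in> K" hence "Suc k \<le> k" unfolding k_def by (rule Max_ge[OF fK])
    thus False by simp
  qed
  have eig: "\<And>i. i < k \<Longrightarrow> A *v e i = complex_of_real (lam i) *s e i"
    and on: "\<And>i j. i < k \<Longrightarrow> j < k \<Longrightarrow> cinner (e i) (e j) = (if i = j then 1 else 0)"
    using ef unfolding eig_family_def by auto
  define W where "W = {z. \<forall>i<k. cinner (e i) z = 0}"
  have complete: "x = (\<Sum>i<k. cinner (e i) x *s e i)" for x
  proof (rule ccontr)
    assume ne: "x \<noteq> (\<Sum>i<k. cinner (e i) x *s e i)"
    define y where "y = x - (\<Sum>i<k. cinner (e i) x *s e i)"
    have "y \<noteq> 0" using ne by (simp add: y_def)
    have "cinner (e j) y = 0" if "j < k" for j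
    proof -
      have "cinner (e j) (\<Sum>i<k. cinner (e i) x *s e i) = (\<Sum>i<k. cinner (e i) x * (if j = i then 1 else 0))"
        using that on by (simp add: cinner_sum_right cinner_scale_right)
      also have "\<dots> = (\<Sum>i<k. if i = j then cinner (e i) x else 0)" by (intro sum.cong) auto
      also have "\<dots> = cinner (e j) x" using that by simp
      finally show ?thesis by (simp add: y_def cinner_diff_right)
    qed
    hence yW: "y \<in> W" unfolding W_def by auto
    have clW: "closed W"
    proof -
      have "W = (\<Inter>i<k. {z. cinner (e i) z = 0})" unfolding W_def by auto
      moreover have "closed {z. cinner (e i) z = 0}" for i
        unfolding cinner_def by (intro closed_Collect_eq continuous_intros)
      ultimately show ?thesis by auto
    qed
    have scW: "c *s z \<in> W" if "z \<in> W" for z c using that unfolding W_def by (simp add: cinner_scale_right)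
    have dfW: "z1 - z2 \<in> W" if "z1 \<in> W" "z2 \<in> W" for z1 z2 using that unfolding W_def by (simp add: cinner_diff_right)
    have AW: "A *v z \<in> W" if "z \<in> W" for z
      using that unfolding W_def by (simp add: hermitian_adj[OF herm] eig cinner_scale_left)
    obtain x0 m where x0: "x0 \<in> W" "norm x0 = 1" "A *v x0 = complex_of_real m *s x0"
      using eig_in_subspace[OF herm clW scW dfW AW yW \<open>y \<noteq> 0\<close>] by blast
    have "eig_family A (Suc k) (e(k := x0)) (lam(k := m))"
      unfolding eig_family_def
    proof (intro conjI allI impI)
      fix i assume "i < Suc k"
      thus "A *v (e(k := x0)) i = complex_of_real ((lam(k := m)) i) *s (e(k := x0)) i"
        using eig x0 by (cases "i = k") auto
    next
      fix i j assume ij: "i < Suc k" "j < Suc k"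
      have c1: "cinner (e i) x0 = 0" if "i < k" for i using x0 that unfolding W_def by auto
      have c2: "cinner x0 (e i) = 0" if "i < k" for i using c1[OF that] cinner_commute by (metis complex_cnj_zero)
      have c3: "cinner x0 x0 = 1" using x0 by (simp add: cinner_self)
      show "cinner ((e(k := x0)) i) ((e(k := x0)) j) = (if i = j then 1 else 0)"
        using ij on c1 c2 c3 by (cases "i = k"; cases "j = k") auto
    qed
    hence "Suc k \<in> K" unfolding K_def by blast
    thus False using notin by simp
  qed
  show ?thesis using ef complete by blast
qed

definition tvec :: "complex^'n \<Rightarrow> complex^'m \<Rightarrow> complex^('n\<times>'m)" where
  "tvec x y = (\<chi> a. x$(fst a) * y$(snd a))"

lemma sum_pair_UNIV: "(\<Sum>a\<in>(UNIV::('n::finite\<times>'m::finite) set). f a) = (\<Sum>i\<in>UNIV. \<Sum>j\<in>UNIV. f (i,j))"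
  using sum.cartesian_product[of "\<lambda>i j. f (i,j)" UNIV UNIV] by (simp add: case_prod_beta)

lemma tensor_mv: "tensor_op A B *v tvec x y = tvec (A *v x) (B *v y)"
proof -
  have "(tensor_op A B *v tvec x y) $ a = (tvec (A *v x) (B *v y)) $ a" for a
  proof -
    obtain a1 a2 where a: "a = (a1, a2)" by (cases a)
    have "(tensor_op A B *v tvec x y) $ a = (\<Sum>i\<in>UNIV. \<Sum>j\<in>UNIV. (A$a1$i * x$i) * (B$a2$j * y$j))"
      unfolding matrix_vector_mult_def tensor_op_def tvec_def a
      by (simp add: sum_pair_UNIV mult_ac)
    also have "\<dots> = (\<Sum>i\<in>UNIV. A$a1$i * x$i) * (\<Sum>j\<in>UNIV. B$a2$j * y$j)"
      by (simp add: sum_product)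
    finally show ?thesis by (simp add: tvec_def matrix_vector_mult_def a)
  qed
  thus ?thesis by (simp add: vec_eq_iff)
qed

lemma cinner_tvec: "cinner (tvec x y) (tvec u v) = cinner x u * cinner y v"
proof -
  have "cinner (tvec x y) (tvec u v) = (\<Sum>i\<in>UNIV. \<Sum>j\<in>UNIV. (cnj (x$i) * u$i) * (cnj (y$j) * v$j))"
    unfolding cinner_def tvec_def by (simp add: sum_pair_UNIV mult_ac)
  also have "\<dots> = cinner x u * cinner y v" unfolding cinner_def by (simp add: sum_product)
  finally show ?thesis .
qed

lemma bform_tensor: "cinner (tvec x y) (tensor_op A B *v tvec u v) = cinner x (A *v u) * cinner y (B *v v)"
  by (simp add: tensor_mv cinner_tvec)

lemma trace_proj_right: "trace (X ** proj w) = qform X w"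
  unfolding trace_def matrix_matrix_mult_def proj_def qform_def
  by (simp add: sum_distrib_left sum_distrib_right mult_ac)

lemma trace_proj_left: "trace (proj w ** rho) = qform rho w"
proof -
  have "trace (proj w ** rho) = (\<Sum>a\<in>UNIV. \<Sum>b\<in>UNIV. cnj (w$b) * rho$b$a * w$a)"
    unfolding trace_def matrix_matrix_mult_def proj_def by (simp add: mult_ac)
  also have "\<dots> = qform rho w" unfolding qform_def by (rule sum.swap)
  finally show ?thesis .
qed

lemma tensor_proj: "tensor_op (proj x) (proj y) = proj (tvec x y)"
  by (simp add: tensor_op_def proj_def tvec_def vec_eq_iff mult_ac)

lemma tensor_sum:
  "tensor_op (\<chi> i j. \<Sum>q\<in>Q. a q * proj (x q) $ i $ j) (\<chi> i j. \<Sum>r\<in>R. b r * proj (y r) $ i $ j)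
   = (\<chi> s t. \<Sum>p\<in>Q\<times>R. (a (fst p) * b (snd p)) * proj (tvec (x (fst p)) (y (snd p))) $ s $ t)"
proof -
  have "(\<Sum>q\<in>Q. a q * proj (x q) $ fst s $ fst t) * (\<Sum>r\<in>R. b r * proj (y r) $ snd s $ snd t)
     = (\<Sum>p\<in>Q\<times>R. (a (fst p) * b (snd p)) * proj (tvec (x (fst p)) (y (snd p))) $ s $ t)" for s t
  proof -
    have "(\<Sum>q\<in>Q. a q * proj (x q) $ fst s $ fst t) * (\<Sum>r\<in>R. b r * proj (y r) $ snd s $ snd t)
       = (\<Sum>q\<in>Q. \<Sum>r\<in>R. (a q * proj (x q) $ fst s $ fst t) * (b r * proj (y r) $ snd s $ snd t))"
      by (rule sum_product)
    also have "\<dots> = (\<Sum>q\<in>Q. \<Sum>r\<in>R. (a q * b r) * proj (tvec (x q) (y r)) $ s $ t)"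
      by (intro sum.cong refl) (simp add: proj_def tvec_def mult_ac)
    also have "\<dots> = (\<Sum>p\<in>Q\<times>R. (a (fst p) * b (snd p)) * proj (tvec (x (fst p)) (y (snd p))) $ s $ t)"
      by (simp add: sum.cartesian_product case_prod_beta)
    finally show ?thesis .
  qed
  thus ?thesis by (simp add: tensor_op_def vec_eq_iff)
qed

lemma trace_lin:
  "trace ((\<chi> s t. \<Sum>p\<in>P. c p * M p $ s $ t) ** rho) = (\<Sum>p\<in>P. c p * trace (M p ** rho))"
proof -
  have "trace ((\<chi> s t. \<Sum>p\<in>P. c p * M p $ s $ t) ** rho)
      = (\<Sum>a\<in>UNIV. \<Sum>b\<in>UNIV. \<Sum>p\<in>P. c p * (M p $ a $ b * rho $ b $ a))"
    by (simp add: trace_def matrix_matrix_mult_def sum_distrib_right mult.assoc)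
  also have "\<dots> = (\<Sum>a\<in>UNIV. \<Sum>p\<in>P. \<Sum>b\<in>UNIV. c p * (M p $ a $ b * rho $ b $ a))"
    by (intro sum.cong refl, rule sum.swap)
  also have "\<dots> = (\<Sum>p\<in>P. \<Sum>a\<in>UNIV. \<Sum>b\<in>UNIV. c p * (M p $ a $ b * rho $ b $ a))"
    by (rule sum.swap)
  also have "\<dots> = (\<Sum>p\<in>P. c p * trace (M p ** rho))"
    by (simp add: trace_def matrix_matrix_mult_def sum_distrib_left)
  finally show ?thesis .
qed

lemma mv_sum: "(A::complex^'n^'m) *v (\<Sum>q\<in>Q. f q) = (\<Sum>q\<in>Q. A *v f q)"
  by (induction Q rule: infinite_finite_induct) (auto simp: matrix_vector_right_distrib)

lemma mv_axis: "((A::complex^'n^'m) *v axis j 1) $ i = A $ i $ j"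
  by (simp add: matrix_vector_mult_def axis_def if_distrib cong: if_cong)

lemma cinner_axis: "cinner x (axis j 1) = cnj (x $ j)"
  by (simp add: cinner_def axis_def if_distrib cong: if_cong)

lemma entry_rep:
  fixes A :: "complex^'n^'n"
  assumes comp: "\<And>x. x = (\<Sum>q<k. cinner (e q) x *s e q)"
    and eig: "\<And>q. q < k \<Longrightarrow> A *v e q = c q *s e q"
  shows "A = (\<chi> i j. \<Sum>q\<in>{..<k}. c q * proj (e q) $ i $ j)"
proof -
  have "A $ i $ j = (\<Sum>q\<in>{..<k}. c q * proj (e q) $ i $ j)" for i j
  proof -
    have "A $ i $ j = (A *v (\<Sum>q<k. cinner (e q) (axis j 1) *s e q)) $ i"
      using comp[of "axis j 1"] mv_axis[of A j i] by simp
    also have "\<dots> = (\<Sum>q<k. cnj (e q $ j) * (c q * e q $ i))"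
      by (simp add: mv_sum mv_scale eig cinner_axis sum_component mult.assoc)
    also have "\<dots> = (\<Sum>q\<in>{..<k}. c q * proj (e q) $ i $ j)"
      by (intro sum.cong refl) (simp add: proj_def mult_ac)
    finally show ?thesis .
  qed
  thus ?thesis by (simp add: vec_eq_iff)
qed

lemma proj_scale: "cmod c = 1 \<Longrightarrow> proj (c *s v) = proj v"
proof -
  assume c: "cmod c = 1"
  have "c * cnj c = 1" using c by (metis complex_norm_square mult.commute of_real_1 one_power2 complex_mult_cnj)
  hence "c * v $ i * cnj (c * v $ j) = v $ i * cnj (v $ j)" for i j
    by (simp add: mult_ac)
  thus ?thesis by (simp add: proj_def vec_eq_iff)
qed

lemma tensor_one: "tensor_op (mat 1 :: complex^'n^'n) (mat 1 :: complex^'m^'m) = mat 1"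
  by (simp add: tensor_op_def mat_def vec_eq_iff prod_eq_iff)

lemma sum_swap_UNIV: "(\<Sum>a\<in>UNIV. g (prod.swap a)) = (\<Sum>a\<in>UNIV. g a)"
  by (rule sum.reindex_bij_witness[of _ prod.swap prod.swap]) auto

lemma sum_swap2: "(\<Sum>a\<in>UNIV. \<Sum>b\<in>UNIV. F (prod.swap a) (prod.swap b)) = (\<Sum>a\<in>UNIV. \<Sum>b\<in>UNIV. F a b)"
proof -
  have "(\<Sum>a\<in>UNIV. \<Sum>b\<in>UNIV. F (prod.swap a) (prod.swap b)) = (\<Sum>a\<in>UNIV. \<Sum>b\<in>UNIV. F (prod.swap a) b)"
    by (intro sum.cong refl) (rule sum_swap_UNIV)
  also have "\<dots> = (\<Sum>a\<in>UNIV. \<Sum>b\<in>UNIV. F a b)" by (rule sum_swap_UNIV)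
  finally show ?thesis .
qed

lemma qform_swap:
  assumes "perm_invariant rho"
  shows "qform rho (tvec y x) = qform rho (tvec x y)"
proof -
  define w where "w = tvec x y"
  define G where "G a b = cnj (w $ a) * rho $ prod.swap a $ prod.swap b * w $ b" for a b
  have ww: "tvec y x $ a = w $ prod.swap a" for a by (simp add: tvec_def w_def mult.commute)
  have "qform rho (tvec y x) = (\<Sum>a\<in>UNIV. \<Sum>b\<in>UNIV. G (prod.swap a) (prod.swap b))"
    unfolding qform_def ww G_def by simp
  also have "\<dots> = (\<Sum>a\<in>UNIV. \<Sum>b\<in>UNIV. G a b)" by (rule sum_swap2)
  also have "\<dots> = qform rho w"
  proof -
    have "rho $ prod.swap a $ prod.swap b = rho $ a $ b" for a b
      using assms unfolding perm_invariant_def by metis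
    thus ?thesis unfolding qform_def G_def by simp
  qed
  finally show ?thesis by (simp add: w_def)
qed

lemma find_i0:
  fixes Om :: "complex^'n^'n"
  assumes vo: "verification_operator Om Psi" and nP: "norm Psi = 1"
    and ef: "eig_family Om k e lam" and comp: "\<And>x. x = (\<Sum>q<k. cinner (e q) x *s e q)"
  shows "\<exists>i0 c. i0 < k \<and> Psi = c *s e i0 \<and> cmod c = 1 \<and> lam i0 = 1 \<and> (\<forall>q<k. q \<noteq> i0 \<longrightarrow> lam q \<noteq> 1)"
proof -
  have herm: "hermitian Om" and OP: "Om *v Psi = Psi" and nd: "\<And>v. Om *v v = v \<Longrightarrow> \<exists>c. v = c *s Psi"
    using vo unfolding verification_operator_def by auto
  have eig: "\<And>i. i < k \<Longrightarrow> Om *v e i = complex_of_real (lam i) *s e i"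
    and on: "\<And>i j. i < k \<Longrightarrow> j < k \<Longrightarrow> cinner (e i) (e j) = (if i = j then 1 else 0)"
    using ef unfolding eig_family_def by auto
  have cPP: "cinner Psi Psi = 1" using nP by (simp add: cinner_self)
  obtain i0 where i0: "i0 < k" "cinner (e i0) Psi \<noteq> 0"
  proof (rule ccontr)
    assume "\<not> thesis"
    hence "\<forall>q<k. cinner (e q) Psi = 0" using that by blast
    hence "Psi = 0" using comp[of Psi] by simp
    thus False using nP by simp
  qed
  have "cinner (e i0) Psi = cinner (e i0) (Om *v Psi)" using OP by simp
  also have "\<dots> = complex_of_real (lam i0) * cinner (e i0) Psi"
    by (simp add: hermitian_adj[OF herm] eig[OF i0(1)] cinner_scale_left)
  finally have "(complex_of_real (lam i0) - 1) * cinner (e i0) Psi = 0" by (simp add: algebra_simps)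
  hence l1: "lam i0 = 1" using i0(2) by simp
  have "Om *v e i0 = e i0" using eig[OF i0(1)] l1 by simp
  then obtain c' where c': "e i0 = c' *s Psi" using nd by blast
  have "cnj c' * c' = 1" using on[OF i0(1) i0(1)] c' cPP by (simp add: cinner_scale_left cinner_scale_right) (simp add: mult.commute)
  hence "(complex_of_real (cmod c'))^2 = 1" using complex_norm_square[of c'] by (simp add: mult.commute)
  hence "(cmod c')^2 = 1" by (metis of_real_eq_1_iff of_real_power)
  hence n1: "cmod c' = 1" using norm_ge_zero[of c'] by (simp add: power2_eq_1_iff)
  hence c'n: "c' \<noteq> 0" "cmod c' = 1" by auto
  have Pe: "Psi = (1 / c') *s e i0" using c' c'n(1) by (simp add: vec_eq_iff)
  have cm: "cmod (1 / c') = 1" using c'n by (simp add: norm_divide)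
  have others: "lam q \<noteq> 1" if "q < k" "q \<noteq> i0" for q
  proof
    assume "lam q = 1"
    hence "Om *v e q = e q" using eig[OF that(1)] by simp
    then obtain c'' where c'': "e q = c'' *s Psi" using nd by blast
    have "cinner (e i0) (e q) = cnj c' * c''" using c' c'' cPP by (simp add: cinner_scale_left cinner_scale_right)
    moreover have "cinner (e i0) (e q) = 0" using on[OF i0(1) that(1)] that(2) by simp
    ultimately have "c'' = 0" using c'n(1) by simp
    hence "cinner (e q) (e q) = 0" using c'' by simp
    thus False using on[OF that(1) that(1)] by simp
  qed
  show ?thesis using i0(1) Pe cm l1 others by blast
qed

lemma sum_cart: "(\<Sum>p\<in>A\<times>B. g (fst p) (snd p)) = (\<Sum>a\<in>A. \<Sum>b\<in>B. g a b)"
  by (simp add: sum.cartesian_product case_prod_beta)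

lemma pf_expand:
  fixes Om :: "complex^'n^'n" and rho :: "complex^('n\<times>'n)^('n\<times>'n)"
  assumes ef: "eig_family Om k e lam" and comp: "\<And>x. x = (\<Sum>q<k. cinner (e q) x *s e q)"
    and i0: "i0 < k" "Psi = c *s e i0" "cmod c = 1"
  shows "p_val Om rho = (\<Sum>q<k. \<Sum>l<k. lam q * Re (qform rho (tvec (e q) (e l))))"
    and "f_val Om Psi rho = (\<Sum>q<k. lam q * Re (qform rho (tvec (e q) (e i0))))"
    and "Re (trace rho) = (\<Sum>q<k. \<Sum>l<k. Re (qform rho (tvec (e q) (e l))))"
proof -
  have eig: "\<And>i. i < k \<Longrightarrow> Om *v e i = complex_of_real (lam i) *s e i"
    using ef unfolding eig_family_def by auto
  have rO: "Om = (\<chi> i j. \<Sum>q\<in>{..<k}. complex_of_real (lam q) * proj (e q) $ i $ j)"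
    by (rule entry_rep[OF comp eig])
  have r1: "(mat 1 :: complex^'n^'n) = (\<chi> i j. \<Sum>q\<in>{..<k}. 1 * proj (e q) $ i $ j)"
    by (rule entry_rep[OF comp]) simp
  have rP: "proj Psi = (\<chi> i j. \<Sum>q\<in>{i0}. 1 * proj (e q) $ i $ j)"
  proof -
    have "proj Psi = proj (e i0)" using i0 proj_scale by simp
    thus ?thesis by (simp add: vec_eq_iff)
  qed
  have "tensor_op Om (mat 1) = (\<chi> s t. \<Sum>p\<in>{..<k}\<times>{..<k}. (complex_of_real (lam (fst p)) * 1) * proj (tvec (e (fst p)) (e (snd p))) $ s $ t)"
    by (subst rO, subst r1, rule tensor_sum)
  hence "trace (tensor_op Om (mat 1) ** rho) = (\<Sum>p\<in>{..<k}\<times>{..<k}. (complex_of_real (lam (fst p)) * 1) * qform rho (tvec (e (fst p)) (e (snd p))))"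
    by (simp add: trace_lin trace_proj_left)
  thus "p_val Om rho = (\<Sum>q<k. \<Sum>l<k. lam q * Re (qform rho (tvec (e q) (e l))))"
    unfolding p_val_def by (simp add: Re_sum sum_cart[where g = "\<lambda>q l. lam q * Re (qform rho (tvec (e q) (e l)))"])
  have "tensor_op Om (proj Psi) = (\<chi> s t. \<Sum>p\<in>{..<k}\<times>{i0}. (complex_of_real (lam (fst p)) * 1) * proj (tvec (e (fst p)) (e (snd p))) $ s $ t)"
    by (subst rO, subst rP, rule tensor_sum)
  hence "trace (tensor_op Om (proj Psi) ** rho) = (\<Sum>p\<in>{..<k}\<times>{i0}. (complex_of_real (lam (fst p)) * 1) * qform rho (tvec (e (fst p)) (e (snd p))))"
    by (simp add: trace_lin trace_proj_left)
  thus "f_val Om Psi rho = (\<Sum>q<k. lam q * Re (qform rho (tvec (e q) (e i0))))"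
    unfolding f_val_def by (simp add: Re_sum sum_cart[where g = "\<lambda>q l. lam q * Re (qform rho (tvec (e q) (e l)))"])
  have "(mat 1 :: complex^('n\<times>'n)^('n\<times>'n)) = (\<chi> s t. \<Sum>p\<in>{..<k}\<times>{..<k}. (1 * 1) * proj (tvec (e (fst p)) (e (snd p))) $ s $ t)"
    by (subst tensor_one[symmetric], subst r1, subst r1, rule tensor_sum)
  hence "trace (mat 1 ** rho) = (\<Sum>p\<in>{..<k}\<times>{..<k}. (1 * 1) * qform rho (tvec (e (fst p)) (e (snd p))))"
    by (simp only: trace_lin trace_proj_left)
  hence "trace rho = (\<Sum>p\<in>{..<k}\<times>{..<k}. (1 * 1) * qform rho (tvec (e (fst p)) (e (snd p))))"
    by simp
  thus "Re (trace rho) = (\<Sum>q<k. \<Sum>l<k. Re (qform rho (tvec (e q) (e l))))"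
    by (simp add: Re_sum sum_cart[where g = "\<lambda>q l. Re (qform rho (tvec (e q) (e l)))"])
qed

lemma lp:
  fixes r :: "nat \<Rightarrow> nat \<Rightarrow> real" and lam :: "nat \<Rightarrow> real"
  assumes i0: "i0 < k" and rnn: "\<And>q l. q < k \<Longrightarrow> l < k \<Longrightarrow> r q l \<ge> 0"
    and rsym: "\<And>q l. q < k \<Longrightarrow> l < k \<Longrightarrow> r q l = r l q"
    and l1: "lam i0 = 1" and lb: "\<And>q. q < k \<Longrightarrow> q \<noteq> i0 \<Longrightarrow> tau \<le> lam q \<and> lam q \<le> beta"
    and s: "0 \<le> s" "s \<le> 1" and b: "0 \<le> beta" and st: "s * (1 - 2*beta) \<le> tau * (1 - s)"
  shows "s * (\<Sum>q<k. \<Sum>l<k. lam q * r q l) - s * beta * (\<Sum>q<k. \<Sum>l<k. r q l) \<le> (\<Sum>q<k. lam q * r q i0)"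
proof -
  define g where "g q l = (if l = i0 then lam q else 0) - s * lam q + s * beta" for q l
  define S where "S = (\<Sum>q<k. \<Sum>l<k. r q l * g q l)"
  have f: "(\<Sum>q<k. lam q * r q i0) = (\<Sum>q<k. \<Sum>l<k. r q l * (if l = i0 then lam q else 0))"
    using i0 by (simp add: mult.commute if_distrib cong: if_cong)
  have "(\<Sum>q<k. lam q * r q i0) - (s * (\<Sum>q<k. \<Sum>l<k. lam q * r q l) - s * beta * (\<Sum>q<k. \<Sum>l<k. r q l))
      = S"
    unfolding f S_def g_def
    by (simp add: sum_distrib_left sum_subtractf[symmetric] sum.distrib[symmetric] algebra_simps)
  moreover have "S \<ge> 0"
  proof -
    have "S = (\<Sum>l<k. \<Sum>q<k. r q l * g q l)" unfolding S_def by (rule sum.swap)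
    also have "\<dots> = (\<Sum>q<k. \<Sum>l<k. r q l * g l q)"
      by (intro sum.cong refl) (simp add: rsym)
    finally have "2 * S = (\<Sum>q<k. \<Sum>l<k. r q l * (g q l + g l q))"
      unfolding S_def by (simp add: algebra_simps sum.distrib)
    also have "\<dots> \<ge> 0"
    proof (intro sum_nonneg)
      fix q l assume q: "q \<in> {..<k}" and l: "l \<in> {..<k}"
      have "g q l + g l q \<ge> 0"
      proof (cases "q = i0")
        case qi: True
        show ?thesis
        proof (cases "l = i0")
          case True
          thus ?thesis using qi l1 s mult_nonneg_nonneg[OF b s(1)] unfolding g_def by (simp add: algebra_simps)
        next
          case False
          have "tau \<le> lam l" using lb l False by auto
          hence "tau * (1 - s) \<le> lam l * (1 - s)" using s by (simp add: mult_right_mono)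
          thus ?thesis using qi False l1 st unfolding g_def by (simp add: algebra_simps)
        qed
      next
        case qn: False
        show ?thesis
        proof (cases "l = i0")
          case True
          have "tau \<le> lam q" using lb q qn by auto
          hence "tau * (1 - s) \<le> lam q * (1 - s)" using s by (simp add: mult_right_mono)
          thus ?thesis using qn True l1 st unfolding g_def by (simp add: algebra_simps)
        next
          case False
          have "lam q \<le> beta" "lam l \<le> beta" using lb q l qn False by auto
          hence "s * (lam q + lam l) \<le> s * (2 * beta)" using s by (intro mult_left_mono) auto
          thus ?thesis using qn False unfolding g_def by (simp add: algebra_simps)
        qed
      qed
      thus "r q l * (g q l + g l q) \<ge> 0" using rnn q l by simp
    qed
    finally show ?thesis by simp
  qed
  ultimately show ?thesis by simp
qed

definition mix :: "real \<Rightarrow> complex^'n \<Rightarrow> real \<Rightarrow> complex^'n \<Rightarrow> complex^'n^'n" where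
  "mix a w1 b w2 = (\<chi> i j. complex_of_real a * proj w1 $ i $ j + complex_of_real b * proj w2 $ i $ j)"

lemma trace_mix: "trace (X ** mix a w1 b w2) = complex_of_real a * qform X w1 + complex_of_real b * qform X w2"
proof -
  have "trace (X ** mix a w1 b w2) = complex_of_real a * trace (X ** proj w1) + complex_of_real b * trace (X ** proj w2)"
    unfolding trace_def matrix_matrix_mult_def mix_def
    by (simp add: distrib_left sum.distrib sum_distrib_left mult_ac)
  thus ?thesis by (simp add: trace_proj_right)
qed

lemma qform_mix: "qform (mix a w1 b w2) z = complex_of_real a * qform (proj w1) z + complex_of_real b * qform (proj w2) z"
  unfolding qform_def mix_def
  by (simp add: distrib_left distrib_right sum.distrib sum_distrib_left mult_ac)

lemma qform_proj: "qform (proj w) z = cnj (cinner w z) * cinner w z"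
proof -
  have "qform (proj w) z = (\<Sum>i\<in>UNIV. \<Sum>j\<in>UNIV. (cnj (z$i) * w$i) * (cnj (w$j) * z$j))"
    unfolding qform_def proj_def by (simp add: mult_ac)
  also have "\<dots> = (\<Sum>i\<in>UNIV. cnj (z$i) * w$i) * (\<Sum>j\<in>UNIV. cnj (w$j) * z$j)" by (simp add: sum_product)
  also have "\<dots> = cnj (cinner w z) * cinner w z" unfolding cinner_def by (simp add: cnj_sum mult.commute)
  finally show ?thesis .
qed

lemma Re_qform_proj: "Re (qform (proj w) z) \<ge> 0"
  unfolding qform_proj by (simp add: mult.commute)

lemma mix_density:
  assumes "0 \<le> a" "0 \<le> b" "a * Re (cinner w1 w1) + b * Re (cinner w2 w2) = 1"
  shows "density (mix a w1 b w2)"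
proof -
  have h: "hermitian (mix a w1 b w2)" unfolding hermitian_def mix_def proj_def by (simp add: mult.commute)
  have "0 \<le> Re (qform (mix a w1 b w2) v)" for v
    unfolding qform_mix using assms(1,2) Re_qform_proj[of w1 v] Re_qform_proj[of w2 v] by simp
  hence "psd (mix a w1 b w2)" using h unfolding psd_def by simp
  moreover have "trace (mix a w1 b w2) = 1"
  proof -
    have "trace (mix a w1 b w2) = trace (mat 1 ** mix a w1 b w2)" by simp
    also have "\<dots> = complex_of_real a * cinner w1 w1 + complex_of_real b * cinner w2 w2"
      unfolding trace_mix by (simp add: qform_cinner)
    also have "\<dots> = 1" using assms(3) by (simp add: cinner_self) (metis of_real_1 of_real_add of_real_mult of_real_power)
    finally show ?thesis .
  qed
  ultimately show ?thesis unfolding density_def by simp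
qed

lemma mix_perm:
  assumes "\<And>a. w1 $ prod.swap a = w1 $ a" "\<And>a. w2 $ prod.swap a = w2 $ a"
  shows "perm_invariant (mix x w1 y w2)"
  unfolding perm_invariant_def mix_def proj_def using assms by simp

lemma proj_mv: "proj p *v y = cinner p y *s p"
  by (simp add: vec_eq_iff proj_def matrix_vector_mult_def cinner_def sum_distrib_left mult_ac)

lemma witness:
  fixes Om :: "complex^'n^'n"
  assumes OP: "Om *v Psi = Psi" and nP: "cinner Psi Psi = 1"
    and v1: "cinner v v = 1" and v2: "Om *v v = complex_of_real beta *s v" and v3: "cinner Psi v = 0"
    and u1: "cinner u u = 1" and u2: "Om *v u = complex_of_real tau *s u" and u3: "cinner Psi u = 0"
    and t: "0 \<le> t" "t \<le> 1"
  defines "rho \<equiv> mix (1 - t) (tvec v v) (t / 2) (tvec Psi u + tvec u Psi)"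
  shows "density rho" "perm_invariant rho"
    "p_val Om rho = (1 - t) * beta + t * (1 + tau) / 2" "f_val Om Psi rho = t * tau / 2"
proof -
  have v3': "cinner v Psi = 0" using v3 cinner_commute[of v Psi] by simp
  have u3': "cinner u Psi = 0" using u3 cinner_commute[of u Psi] by simp
  note simps = qform_cinner matrix_vector_right_distrib tensor_mv cinner_add_left cinner_add_right
    cinner_tvec OP v2 u2 cinner_scale_right proj_mv matrix_vector_mul_lid v1 v3 v3' u1 u3 u3' nP
  have n2: "cinner (tvec Psi u + tvec u Psi) (tvec Psi u + tvec u Psi) = 2"
    by (simp add: simps)
  have n1: "cinner (tvec v v) (tvec v v) = 1" by (simp add: simps)
  show "density rho" unfolding rho_def
    by (rule mix_density) (use t n1 n2 in auto)
  show "perm_invariant rho" unfolding rho_def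
    by (rule mix_perm) (auto simp: tvec_def mult.commute add.commute)
  have "trace (tensor_op Om (mat 1) ** rho) = complex_of_real (1 - t) * complex_of_real beta + complex_of_real (t/2) * (1 + complex_of_real tau)"
    unfolding rho_def trace_mix by (simp add: simps)
  thus "p_val Om rho = (1 - t) * beta + t * (1 + tau) / 2"
    unfolding p_val_def by simp
  have h: "trace (tensor_op Om (proj Psi) ** rho) = complex_of_real (t/2) * complex_of_real tau"
    unfolding rho_def trace_mix by (simp add: simps)
  show "f_val Om Psi rho = t * tau / 2"
    unfolding f_val_def h by simp
qed

lemma normalize_eig:
  fixes A :: "complex^'n^'n"
  assumes "real_eigenvalue A l"
  shows "\<exists>v. cinner v v = 1 \<and> A *v v = complex_of_real l *s v"
proof -
  obtain v0 where v0: "v0 \<noteq> 0" "A *v v0 = complex_of_real l *s v0"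
    using assms unfolding real_eigenvalue_def by blast
  define v where "v = complex_of_real (1 / norm v0) *s v0"
  have "cinner v v = complex_of_real ((1 / norm v0)^2 * (norm v0)^2)"
    unfolding v_def by (simp add: cinner_scale_left cinner_scale_right cinner_self[of v0] power2_eq_square)
  also have "\<dots> = 1" using v0(1) by (simp add: field_simps)
  finally have "cinner v v = 1" .
  moreover have "A *v v = complex_of_real l *s v"
    unfolding v_def mv_scale v0(2) by (simp add: vec_eq_iff mult_ac)
  ultimately show ?thesis by blast
qed

lemma eig_orth:
  fixes A :: "complex^'n^'n"
  assumes "hermitian A" "A *v Psi = Psi" "A *v v = complex_of_real l *s v" "l \<noteq> 1"
  shows "cinner Psi v = 0"
proof -
  have "cinner Psi v = cinner (A *v Psi) v" using assms(2) by simp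
  also have "\<dots> = cinner Psi (A *v v)" using hermitian_adj[OF assms(1)] by simp
  also have "\<dots> = complex_of_real l * cinner Psi v" using assms(3) by (simp add: cinner_scale_right)
  finally have "(complex_of_real l - 1) * cinner Psi v = 0" by (simp add: algebra_simps)
  thus ?thesis using assms(4) by simp
qed

lemma eig_nonneg:
  fixes A :: "complex^'n^'n"
  assumes "psd A" "cinner u u = 1" "A *v u = complex_of_real l *s u"
  shows "0 \<le> l"
proof -
  have "0 \<le> Re (qform A u)" using assms(1) unfolding psd_def by blast
  also have "qform A u = complex_of_real l" using assms(2,3) by (simp add: qform_cinner cinner_scale_right)
  finally show ?thesis by simp
qed

theorem corollary7:
  fixes Om :: "complex^'n^'n" and Psi :: "complex^'n"
    and beta tau eps delta :: real
  assumes "CARD('n) \<ge> 2"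
    and "norm Psi = 1"
    and "verification_operator Om Psi"
    and "real_eigenvalue Om beta" and "beta < 1"
    and "\<forall>l. real_eigenvalue Om l \<and> l \<noteq> 1 \<longrightarrow> l \<le> beta"
    and "real_eigenvalue Om tau"
    and "\<forall>l. real_eigenvalue Om l \<longrightarrow> tau \<le> l"
    and "0 < eps" and "eps < 1" and "0 < delta" and "delta \<le> 1/2"
  shows "F1 delta Om Psi \<ge> 1 - eps \<longleftrightarrow>
    (0 < beta \<and> beta < delta \<and> tau * (delta - beta) / (1 + tau - 2 * beta) \<ge> delta * (1 - eps))"
proof -
  note nP = assms(2) and vo = assms(3) and eb = assms(4) and b1 = assms(5) and bmax = assms(6)
    and et = assms(7) and tmin = assms(8) and eps = assms(9,10) and del = assms(11,12)
  have herm: "hermitian Om" and psdO: "psd Om" and OP: "Om *v Psi = Psi"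
    using vo unfolding verification_operator_def by auto
  have cPP: "cinner Psi Psi = 1" using nP by (simp add: cinner_self)
  obtain v where v: "cinner v v = 1" "Om *v v = complex_of_real beta *s v"
    using normalize_eig[OF eb] by blast
  obtain u where u: "cinner u u = 1" "Om *v u = complex_of_real tau *s u"
    using normalize_eig[OF et] by blast
  have tb: "tau \<le> beta" using tmin eb by blast
  have t0: "0 \<le> tau" using eig_nonneg[OF psdO u] .
  have b0: "0 \<le> beta" using t0 tb by simp
  have v3: "cinner Psi v = 0" using eig_orth[OF herm OP v(2)] b1 by simp
  have u3: "cinner Psi u = 0" using eig_orth[OF herm OP u(2)] b1 tb by simp
  define Sset where "Sset = {f_val Om Psi rho / p_val Om rho | rho.
       density rho \<and> perm_invariant rho \<and> delta \<le> p_val Om rho}"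
  have F1S: "F1 delta Om Psi = Inf Sset" unfolding F1_def Sset_def ..
  obtain k e lam where ef: "eig_family Om k e lam" and comp: "\<And>x. x = (\<Sum>i<k. cinner (e i) x *s e i)"
    using spectral[OF herm] by blast
  obtain i0 c where i0: "i0 < k" "Psi = c *s e i0" "cmod c = 1" "lam i0 = 1"
      and oth: "\<And>q. q < k \<Longrightarrow> q \<noteq> i0 \<Longrightarrow> lam q \<noteq> 1"
    using find_i0[OF vo nP ef comp] by blast
  have eig: "\<And>i. i < k \<Longrightarrow> Om *v e i = complex_of_real (lam i) *s e i"
    and on: "\<And>i j. i < k \<Longrightarrow> j < k \<Longrightarrow> cinner (e i) (e j) = (if i = j then 1 else 0)"
    using ef unfolding eig_family_def by auto
  have reig: "real_eigenvalue Om (lam q)" if "q < k" for q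
  proof -
    have "e q \<noteq> 0" using on[OF that that] by auto
    thus ?thesis unfolding real_eigenvalue_def using eig[OF that] by blast
  qed
  have lb: "tau \<le> lam q \<and> lam q \<le> beta" if "q < k" "q \<noteq> i0" for q
    using reig[OF that(1)] oth[OF that] tmin bmax by blast
  have lnn: "0 \<le> lam q" if "q < k" for q
    using lb[OF that] i0(4) t0 by (cases "q = i0") auto
  have elem: "0 \<le> f_val Om Psi rho \<and>
      (beta < 1/2 \<longrightarrow> (tau / (1 + tau - 2*beta)) * p_val Om rho - (tau / (1 + tau - 2*beta)) * beta \<le> f_val Om Psi rho)"
    if rho: "density rho" "perm_invariant rho" for rho
  proof -
    define R where "R q l = Re (qform rho (tvec (e q) (e l)))" for q l
    have pe: "p_val Om rho = (\<Sum>q<k. \<Sum>l<k. lam q * R q l)"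
      and fe: "f_val Om Psi rho = (\<Sum>q<k. lam q * R q i0)"
      and te: "Re (trace rho) = (\<Sum>q<k. \<Sum>l<k. R q l)"
      unfolding R_def using pf_expand[OF ef comp i0(1,2,3)] by blast+
    have Rnn: "R q l \<ge> 0" for q l
      using rho(1) unfolding density_def psd_def R_def by blast
    have Rsym: "R q l = R l q" for q l
      unfolding R_def using qform_swap[OF rho(2)] by simp
    have tr1: "(\<Sum>q<k. \<Sum>l<k. R q l) = 1" using rho(1) te unfolding density_def by simp
    have f0: "0 \<le> f_val Om Psi rho" unfolding fe
      using lnn Rnn by (intro sum_nonneg) (simp add: mult_nonneg_nonneg)
    have "(tau / (1 + tau - 2*beta)) * p_val Om rho - (tau / (1 + tau - 2*beta)) * beta \<le> f_val Om Psi rho"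
      if bh: "beta < 1/2"
    proof -
      define s where "s = tau / (1 + tau - 2*beta)"
      have den: "1 + tau - 2*beta > 0" using bh t0 by simp
      have s0: "0 \<le> s" using den t0 unfolding s_def by simp
      have s1: "s \<le> 1" using den bh unfolding s_def by (simp add: divide_le_eq_1)
      have ss: "s * (1 + tau - 2*beta) = tau" using den unfolding s_def by simp
      have st: "s * (1 - 2*beta) \<le> tau * (1 - s)" using ss by (simp add: algebra_simps)
      have "s * (\<Sum>q<k. \<Sum>l<k. lam q * R q l) - s * beta * (\<Sum>q<k. \<Sum>l<k. R q l) \<le> (\<Sum>q<k. lam q * R q i0)"
        apply (rule lp[where r=R and tau=tau])
        apply (rule i0(1))
        apply (rule Rnn)
        apply (rule Rsym)
        apply (rule i0(4))
        apply (erule (1) lb)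
        apply (rule s0)
        apply (rule s1)
        apply (rule b0)
        apply (rule st)
        done
      thus ?thesis unfolding pe fe tr1 s_def by simp
    qed
    thus ?thesis using f0 by blast
  qed
  have bdd: "bdd_below Sset"
  proof (rule bdd_belowI)
    fix x assume "x \<in> Sset"
    then obtain rho where "x = f_val Om Psi rho / p_val Om rho" "density rho" "perm_invariant rho" "delta \<le> p_val Om rho"
      unfolding Sset_def by blast
    thus "0 \<le> x" using elem del by simp
  qed
  have wit: "density (mix (1 - t) (tvec v v) (t / 2) (tvec Psi u + tvec u Psi)) \<and>
      perm_invariant (mix (1 - t) (tvec v v) (t / 2) (tvec Psi u + tvec u Psi)) \<and>
      p_val Om (mix (1 - t) (tvec v v) (t / 2) (tvec Psi u + tvec u Psi)) = (1 - t) * beta + t * (1 + tau) / 2 \<and>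
      f_val Om Psi (mix (1 - t) (tvec v v) (t / 2) (tvec Psi u + tvec u Psi)) = t * tau / 2"
    if "0 \<le> t" "t \<le> 1" for t
    using witness[OF OP cPP v v3 u u3 that] by blast
  define t1 where "t1 = 2 * (delta - beta) / (1 + tau - 2*beta)"
  have t1_facts: "0 \<le> t1 \<and> t1 \<le> 1 \<and> (1 - t1) * beta + t1 * (1 + tau) / 2 = delta \<and>
      t1 * tau / 2 = tau * (delta - beta) / (1 + tau - 2 * beta)" if bd: "beta < delta"
  proof -
    have den: "1 + tau - 2*beta > 0" using bd del t0 by simp
    have "0 \<le> t1" using den bd unfolding t1_def by simp
    moreover have "t1 \<le> 1" using den bd del t0 unfolding t1_def by (simp add: divide_le_eq_1)
    moreover have "(1 - t1) * beta + t1 * (1 + tau) / 2 = delta"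
    proof -
      have eq: "t1 * (1 + tau - 2*beta) = 2*(delta - beta)" using den unfolding t1_def by simp
      hence eq': "t1 + t1*tau - 2*(t1*beta) = 2*delta - 2*beta" by (simp add: algebra_simps)
      have "(1 - t1) * beta + t1 * (1 + tau) / 2 = beta + (t1 + t1*tau - 2*(t1*beta)) / 2"
        by (simp add: field_simps)
      also have "\<dots> = delta" using eq' by (simp add: field_simps)
      finally show ?thesis .
    qed
    moreover have "t1 * tau / 2 = tau * (delta - beta) / (1 + tau - 2 * beta)"
      using den unfolding t1_def by (simp add: field_simps)
    ultimately show ?thesis by blast
  qed
  show ?thesis
  proof
    assume F: "1 - eps \<le> F1 delta Om Psi"
    have bd: "beta < delta"
    proof (rule ccontr)
      assume "\<not> beta < delta"
      hence "delta \<le> beta" by simp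
      with wit[of 0] have "0 / beta \<in> Sset" unfolding Sset_def by force
      hence "Inf Sset \<le> 0" using cInf_lower[OF _ bdd] by fastforce
      thus False using F F1S eps by simp
    qed
    define r1 where "r1 = mix (1 - t1) (tvec v v) (t1 / 2) (tvec Psi u + tvec u Psi)"
    have r1: "density r1" "perm_invariant r1" "p_val Om r1 = delta"
      "f_val Om Psi r1 = tau * (delta - beta) / (1 + tau - 2 * beta)"
      using wit[of t1] t1_facts[OF bd] unfolding r1_def by auto
    hence "(tau * (delta - beta) / (1 + tau - 2 * beta)) / delta \<in> Sset"
      unfolding Sset_def by force
    hence le: "1 - eps \<le> (tau * (delta - beta) / (1 + tau - 2 * beta)) / delta"
      using cInf_lower[OF _ bdd] F F1S by fastforce
    have c: "delta * (1 - eps) \<le> tau * (delta - beta) / (1 + tau - 2 * beta)"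
    proof -
      define X where "X = tau * (delta - beta) / (1 + tau - 2 * beta)"
      have "(1 - eps) * delta \<le> X" using le pos_le_divide_eq[OF del(1)] unfolding X_def[symmetric] by simp
      thus ?thesis unfolding X_def by (simp add: mult.commute)
    qed
    have "0 < beta"
    proof (rule ccontr)
      assume "\<not> 0 < beta"
      hence "beta = 0" "tau = 0" using b0 tb t0 by auto
      thus False using le eps by simp
    qed
    thus "0 < beta \<and> beta < delta \<and> delta * (1 - eps) \<le> tau * (delta - beta) / (1 + tau - 2 * beta)"
      using bd c by blast
  next
    assume H: "0 < beta \<and> beta < delta \<and> delta * (1 - eps) \<le> tau * (delta - beta) / (1 + tau - 2 * beta)"
    hence bd: "beta < delta" and bp: "0 < beta" and c: "delta * (1 - eps) \<le> tau * (delta - beta) / (1 + tau - 2 * beta)"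
      by auto
    define r1 where "r1 = mix (1 - t1) (tvec v v) (t1 / 2) (tvec Psi u + tvec u Psi)"
    have r1: "density r1" "perm_invariant r1" "p_val Om r1 = delta"
      using wit[of t1] t1_facts[OF bd] unfolding r1_def by auto
    hence ne: "Sset \<noteq> {}" unfolding Sset_def by force
    have den: "1 + tau - 2*beta > 0" using bd del t0 by simp
    define s where "s = tau / (1 + tau - 2*beta)"
    have s0: "0 \<le> s" using den t0 unfolding s_def by simp
    have cs: "delta * (1 - eps) \<le> s * (delta - beta)" using c unfolding s_def by (simp add: field_simps)
    have "1 - eps \<le> x" if "x \<in> Sset" for x
    proof -
      obtain rho where rho: "x = f_val Om Psi rho / p_val Om rho" "density rho" "perm_invariant rho" "delta \<le> p_val Om rho"
        using \<open>x \<in> Sset\<close> unfolding Sset_def by blast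
      define p where "p = p_val Om rho"
      have p0: "0 < p" using rho(4) del unfolding p_def by simp
      have fl: "s * p - s * beta \<le> f_val Om Psi rho"
        using elem[OF rho(2,3)] bd del unfolding s_def p_def by simp
      have "s * (delta - beta) * p \<le> s * (p - beta) * delta"
      proof -
        have "(delta - beta) * p \<le> (p - beta) * delta" using rho(4) bp unfolding p_def
          by (simp add: algebra_simps mult_left_mono)
        thus ?thesis using s0 by (simp add: mult_left_mono mult.assoc)
      qed
      hence "delta * (1 - eps) * p \<le> f_val Om Psi rho * delta"
        using cs fl p0 del
        by (smt (verit) mult_right_mono mult_left_mono right_diff_distrib)
      hence "(1 - eps) * p \<le> f_val Om Psi rho" using del by (simp add: mult.commute mult.left_commute)
      hence "1 - eps \<le> f_val Om Psi rho / p" using pos_le_divide_eq[OF p0] by simp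
      thus ?thesis using rho(1) unfolding p_def by simp
    qed
    hence "1 - eps \<le> Inf Sset" using ne by (intro cInf_greatest) auto
    thus "1 - eps \<le> F1 delta Om Psi" using F1S by simp
  qed
qed

end
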